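(* Let $\mathcal{M}=(\Sigma,\Gamma,\mathcal{H},U,M)$ be a QMM with $n=\dim\mathcal{H}$ and $\rho$ a Hermitian operator on $\mathcal{H}$. Then $\operatorname{span}\mathfrak{D}(\rho,m)\subseteq\operatorname{span}\mathfrak{D}(\rho,n^2-1)$ for every $m\in\mathbb{N}$.
   Context: A quantum Mealy machine (QMM) is a tuple $\mathcal{M}=(\Sigma,\Gamma,\mathcal{H},U,M)$ where $\Sigma,\Gamma$ are finite alphabets, $\mathcal{H}$ a finite-dimensional complex Hilbert space, $U=\{U_\sigma\}_{\sigma\in\Sigma}$ unitary operators on $\mathcal{H}$, $M=\{M_\gamma\}_{\gamma\in\Gamma}$ linear operators with $\sum_\gamma M_\gamma^\dagger M_\gamma=I$. For a word $a$, $|a|$ is its length, $a[l:r]=a[l]\cdots a[r]$ (empty if $l>r$), $U_a=U_{a[|a|]}\cdots U_{a[1]}$, $U_\epsilon=I$. A scheduler for $a\in\Sigma^*$ is a finite non-decreasing integer sequence $\mathcal{S}=(s_1\le\dots\le s_{|\mathcal{S}|})$ in $\{0,\dots,|a|\}$ (possibly empty); $\mathfrak{S}_a$ is the set of schedulers for $a$. With $s_0=0$, $s_{|\mathcal{S}|+1}=|a|$, $a_i=a[s_{i-1}+1:s_i]$. For $b\in\Gamma^{|\mathcal{S}|}$, $V_{b|a,\mathcal{S}}=U_{a_{|\mathcal{S}|+1}}M_{b_{|\mathcal{S}|}}U_{a_{|\mathcal{S}|}}\cdots M_{b_1}U_{a_1}$ and $\rho^{\mathcal{M}}_{b|a,\mathcal{S}}=V_{b|a,\mathcal{S}}\rho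 V_{b|a,\mathcal{S}}^\dagger$. For Hermitian $\rho$ and $m\in\mathbb{N}$, $\mathfrak{D}(\rho,m)=\{\rho^{\mathcal{M}}_{b|a,\mathcal{S}}:a\in\Sigma^*,\mathcal{S}\in\mathfrak{S}_a,b\in\Gamma^{|\mathcal{S}|},|a|+|\mathcal{S}|\le m\}$; spans are complex linear spans. *)

theory Defs
  imports "HOL-Analysis.Analysis"
begin

text \<open>Operators on the n-dimensional Hilbert space H = complex^'n are represented
 as complex n x n matrices (type complex^'n^'n), with n = CARD('n).\<close>

definition adj :: "complex^'n^'m \<Rightarrow> complex^'m^'n" where
  "adj A = (\<chi> i j. cnj (A $ j $ i))"

definition cscale :: "complex \<Rightarrow> complex^'n^'m \<Rightarrow> complex^'n^'m" where
  "cscale c A = (\<chi> i j. c * A $ i $ j)"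

definition cspan :: "(complex^'n^'m) set \<Rightarrow> (complex^'n^'m) set" where
  "cspan S = module.span cscale S"

definition unitary :: "complex^'n^'n \<Rightarrow> bool" where
  "unitary A \<longleftrightarrow> adj A ** A = mat 1 \<and> A ** adj A = mat 1"

definition hermitian :: "complex^'n^'n \<Rightarrow> bool" where
  "hermitian A \<longleftrightarrow> adj A = A"

definition is_QMM :: "('s::finite \<Rightarrow> complex^'n^'n) \<Rightarrow> ('g::finite \<Rightarrow> complex^'n^'n) \<Rightarrow> bool" where
  "is_QMM U M \<longleftrightarrow> (\<forall>\<sigma>. unitary (U \<sigma>)) \<and> (\<Sum>\<gamma>\<in>UNIV. adj (M \<gamma>) ** M \<gamma>) = mat 1"

fun Uw :: "('s \<Rightarrow> complex^'n^'n) \<Rightarrow> 's list \<Rightarrow> complex^'n^'n" where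
  "Uw U [] = mat 1"
| "Uw U (x # w) = Uw U w ** U x"

text \<open>Vseg U M a p [(s_i,b_i),...,(s_k,b_k)] with p = s_{i-1} equals
  U_{a_{k+1}} M_{b_k} U_{a_k} ... M_{b_i} U_{a_i}, where a_j = a[s_{j-1}+1 : s_j]
  and s_{k+1} = |a|.\<close>
fun Vseg :: "('s \<Rightarrow> complex^'n^'n) \<Rightarrow> ('g \<Rightarrow> complex^'n^'n) \<Rightarrow> 's list \<Rightarrow> nat
      \<Rightarrow> (nat \<times> 'g) list \<Rightarrow> complex^'n^'n" where
  "Vseg U M a p [] = Uw U (drop p a)"
| "Vseg U M a p ((s, g) # sb) = Vseg U M a s sb ** M g ** Uw U (take (s - p) (drop p a))"

definition Vop :: "('s \<Rightarrow> complex^'n^'n) \<Rightarrow> ('g \<Rightarrow> complex^'n^'n) \<Rightarrow> 's list \<Rightarrow> nat list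
      \<Rightarrow> 'g list \<Rightarrow> complex^'n^'n" where
  "Vop U M a S b = Vseg U M a 0 (zip S b)"

definition is_scheduler :: "'s list \<Rightarrow> nat list \<Rightarrow> bool" where
  "is_scheduler a S \<longleftrightarrow> sorted S \<and> (\<forall>s\<in>set S. s \<le> length a)"

definition Dset :: "('s \<Rightarrow> complex^'n^'n) \<Rightarrow> ('g \<Rightarrow> complex^'n^'n) \<Rightarrow> complex^'n^'n
      \<Rightarrow> nat \<Rightarrow> (complex^'n^'n) set" where
  "Dset U M \<rho> m = {Vop U M a S b ** \<rho> ** adj (Vop U M a S b) | a S b.
       is_scheduler a S \<and> length b = length S \<and> length a + length S \<le> m}"

end

theory Submission
  imports Defs
begin

type_synonym 'n cm = "complex^'n^'n"

lemma vs_cscale: "vector_space (cscale :: complex \<Rightarrow> complex^'n^'m \<Rightarrow> complex^'n^'m)"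
  by unfold_locales (simp_all add: cscale_def vec_eq_iff algebra_simps)

interpretation cs: vector_space "cscale :: complex \<Rightarrow> complex^'n^'m \<Rightarrow> complex^'n^'m"
  by (rule vs_cscale)

lemma matrix_add_rdistrib': "((B + C) ** (A::'a::semiring_1^'n^'m)) = B ** A + C ** A"
  by (simp add: matrix_matrix_mult_def vec_eq_iff sum.distrib algebra_simps)

lemma mult_cscale_r: "(A::complex^'n^'m) ** cscale c X = cscale c (A ** X)"
  by (simp add: matrix_matrix_mult_def cscale_def vec_eq_iff sum_distrib_left algebra_simps)

lemma mult_cscale_l: "cscale c (X::complex^'n^'m) ** A = cscale c (X ** A)"
  by (simp add: matrix_matrix_mult_def cscale_def vec_eq_iff sum_distrib_left algebra_simps)

lemma adj_mult: "adj ((A::complex^'n^'m) ** B) = adj B ** adj A"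
  by (simp add: matrix_matrix_mult_def adj_def vec_eq_iff mult.commute)

lemma adj_one: "adj (mat 1 :: complex^'n^'n) = mat 1"
  by (simp add: adj_def mat_def vec_eq_iff)

definition cf :: "complex^'n^'n \<Rightarrow> complex^'n^'n \<Rightarrow> complex^'n^'n" where
  "cf A X = A ** X ** adj A"

lemma cf_hom: "module_hom cscale cscale (cf A)"
proof -
  interpret m: module "cscale :: complex \<Rightarrow> complex^'n^'n \<Rightarrow> complex^'n^'n"
    using vs_cscale module_iff_vector_space by blast
  show ?thesis
    by unfold_locales
      (simp_all add: cf_def matrix_add_ldistrib matrix_add_rdistrib' mult_cscale_r mult_cscale_l)
qed

lemma cf_span: "cf A ` cs.span S \<subseteq> cs.span (cf A ` S)"
  using module_hom.span_image[OF cf_hom, of A S] by simp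

fun opm :: "('s \<Rightarrow> complex^'n^'n) \<Rightarrow> ('g \<Rightarrow> complex^'n^'n) \<Rightarrow> 's + 'g \<Rightarrow> complex^'n^'n" where
  "opm U M (Inl s) = U s"
| "opm U M (Inr g) = M g"

fun Lw :: "('s \<Rightarrow> complex^'n^'n) \<Rightarrow> ('g \<Rightarrow> complex^'n^'n) \<Rightarrow> ('s + 'g) list \<Rightarrow> complex^'n^'n" where
  "Lw U M [] = mat 1"
| "Lw U M (x # xs) = Lw U M xs ** opm U M x"

fun opsx :: "'s list \<Rightarrow> nat \<Rightarrow> (nat \<times> 'g) list \<Rightarrow> ('s + 'g) list" where
  "opsx a p [] = map Inl (drop p a)"
| "opsx a p ((s, g) # sb) = map Inl (take (s - p) (drop p a)) @ Inr g # opsx a s sb"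

lemma Lw_append: "Lw U M (xs @ ys) = Lw U M ys ** Lw U M xs"
  by (induction xs) (simp_all add: matrix_mul_assoc)

lemma Uw_Lw: "Uw U w = Lw U M (map Inl w)"
  by (induction w) simp_all

lemma Vseg_opsx: "Vseg U M a p sb = Lw U M (opsx a p sb)"
proof (induction sb arbitrary: p)
  case Nil then show ?case by (simp add: Uw_Lw[of U _ M])
next
  case (Cons x sb)
  obtain s g where x: "x = (s, g)" by (cases x)
  show ?case using Cons by (simp add: x Lw_append Uw_Lw[of U _ M] matrix_mul_assoc)
qed

lemma length_opsx:
  "sorted (p # map fst sb) \<Longrightarrow> \<forall>x\<in>set sb. fst x \<le> length a \<Longrightarrow> p \<le> length a \<Longrightarrow>
   length (opsx a p sb) = length a - p + length sb"
proof (induction sb arbitrary: p)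
  case Nil then show ?case by simp
next
  case (Cons x sb)
  obtain s g where x: "x = (s, g)" by (cases x)
  have "s \<le> length a" "p \<le> s" "sorted (s # map fst sb)" using Cons.prems by (auto simp: x)
  then show ?case using Cons.IH[of s] Cons.prems by (auto simp: x)
qed

lemma Uw_snoc: "Uw U (w @ [x]) = U x ** Uw U w"
  by (induction w) (simp_all add: matrix_mul_assoc)

lemma Vseg_snocU:
  "\<forall>x\<in>set sb. fst x \<le> length a \<Longrightarrow> p \<le> length a \<Longrightarrow>
   Vseg U M (a @ [\<sigma>]) p sb = U \<sigma> ** Vseg U M a p sb"
proof (induction sb arbitrary: p)
  case Nil then show ?case by (simp add: Uw_snoc)
next
  case (Cons x sb)
  obtain s g where x: "x = (s, g)" by (cases x)
  have "s \<le> length a" using Cons.prems by (auto simp: x)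
  then show ?case using Cons.IH[of s] Cons.prems by (auto simp: x matrix_mul_assoc)
qed

lemma Vseg_snocM:
  "\<forall>x\<in>set sb. fst x \<le> length a \<Longrightarrow> p \<le> length a \<Longrightarrow>
   Vseg U M a p (sb @ [(length a, \<gamma>)]) = M \<gamma> ** Vseg U M a p sb"
proof (induction sb arbitrary: p)
  case Nil then show ?case by simp
next
  case (Cons x sb)
  obtain s g where x: "x = (s, g)" by (cases x)
  have "s \<le> length a" using Cons.prems by (auto simp: x)
  then show ?case using Cons.IH[of s] Cons.prems by (auto simp: x matrix_mul_assoc)
qed

lemma exists_rep:
  "\<exists>a S b. is_scheduler a S \<and> length b = length S \<and> length a + length S = length x
      \<and> Vop U M a S b = Lw U M x"
proof (induction x rule: rev_induct)
  case Nil
  show ?case by (rule exI[of _ "[]"], rule exI[of _ "[]"], rule exI[of _ "[]"])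
    (simp add: is_scheduler_def Vop_def)
next
  case (snoc z x)
  then obtain a S b where h: "is_scheduler a S" "length b = length S"
    "length a + length S = length x" "Vop U M a S b = Lw U M x" by blast
  have fz: "\<forall>y\<in>set (zip S b). fst y \<le> length a"
    using h(1) by (auto simp: is_scheduler_def dest: set_zip_leftD)
  show ?case
  proof (cases z)
    case (Inl \<sigma>)
    show ?thesis
      apply (rule exI[of _ "a @ [\<sigma>]"], rule exI[of _ S], rule exI[of _ b])
      using h fz by (auto simp: is_scheduler_def Vop_def Vseg_snocU Lw_append Inl)
  next
    case (Inr \<gamma>)
    show ?thesis
      apply (rule exI[of _ a], rule exI[of _ "S @ [length a]"], rule exI[of _ "b @ [\<gamma>]"])
      using h fz by (auto simp: is_scheduler_def Vop_def Vseg_snocM Lw_append Inr sorted_append)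
  qed
qed

definition Eset :: "('s \<Rightarrow> complex^'n^'n) \<Rightarrow> ('g \<Rightarrow> complex^'n^'n) \<Rightarrow> complex^'n^'n
      \<Rightarrow> nat \<Rightarrow> (complex^'n^'n) set" where
  "Eset U M \<rho> m = {cf (Lw U M x) \<rho> | x. length x \<le> m}"

lemma Dset_Eset: "Dset U M \<rho> m = Eset U M \<rho> m"
proof
  show "Dset U M \<rho> m \<subseteq> Eset U M \<rho> m"
  proof
    fix X assume "X \<in> Dset U M \<rho> m"
    then obtain a S b where h: "X = Vop U M a S b ** \<rho> ** adj (Vop U M a S b)"
      "is_scheduler a S" "length b = length S" "length a + length S \<le> m"
      unfolding Dset_def by blast
    have "length (opsx a 0 (zip S b)) = length a - 0 + length (zip S b)"
      using h(2,3) by (intro length_opsx) (auto simp: is_scheduler_def dest: set_zip_leftD)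
    then show "X \<in> Eset U M \<rho> m" unfolding Eset_def cf_def
      using h by (auto simp: Vop_def Vseg_opsx)
  qed
next
  show "Eset U M \<rho> m \<subseteq> Dset U M \<rho> m"
  proof
    fix X assume "X \<in> Eset U M \<rho> m"
    then obtain x where x: "X = cf (Lw U M x) \<rho>" "length x \<le> m" unfolding Eset_def by blast
    obtain a S b where h: "is_scheduler a S" "length b = length S" "length a + length S = length x"
      "Vop U M a S b = Lw U M x" using exists_rep by blast
    show "X \<in> Dset U M \<rho> m" unfolding Dset_def
      apply (simp only: mem_Collect_eq)
      apply (rule exI[of _ a], rule exI[of _ S], rule exI[of _ b])
      using h x by (simp add: cf_def)
  qed
qed

lemma cf_cf: "cf (Lw U M (x @ [z])) \<rho> = cf (opm U M z) (cf (Lw U M x) \<rho>)"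
  by (simp add: cf_def Lw_append adj_mult matrix_mul_assoc)

lemma Eset_mono: "i \<le> j \<Longrightarrow> Eset U M \<rho> i \<subseteq> Eset U M \<rho> j"
  unfolding Eset_def by auto

lemma Eset_rho: "\<rho> \<in> Eset U M \<rho> k"
  unfolding Eset_def by (auto intro!: exI[of _ "[]"] simp: cf_def adj_one)

lemma Eset_Suc1: "Eset U M \<rho> (Suc k) \<subseteq> insert \<rho> (\<Union>z. cf (opm U M z) ` Eset U M \<rho> k)"
proof
  fix X assume "X \<in> Eset U M \<rho> (Suc k)"
  then obtain x where x: "X = cf (Lw U M x) \<rho>" "length x \<le> Suc k" unfolding Eset_def by blast
  show "X \<in> insert \<rho> (\<Union>z. cf (opm U M z) ` Eset U M \<rho> k)"
  proof (cases x rule: rev_exhaust)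
    case Nil then show ?thesis using x by (simp add: cf_def adj_one)
  next
    case (snoc y z)
    then have "cf (Lw U M y) \<rho> \<in> Eset U M \<rho> k" using x unfolding Eset_def by auto
    moreover have "X = cf (opm U M z) (cf (Lw U M y) \<rho>)" using x snoc by (simp add: cf_cf)
    ultimately have "X \<in> cf (opm U M z) ` Eset U M \<rho> k" by (rule rev_image_eqI)
    then show ?thesis by blast
  qed
qed

lemma Eset_Suc2: "cf (opm U M z) ` Eset U M \<rho> k \<subseteq> Eset U M \<rho> (Suc k)"
proof
  fix X assume "X \<in> cf (opm U M z) ` Eset U M \<rho> k"
  then obtain x where x: "X = cf (opm U M z) (cf (Lw U M x) \<rho>)" "length x \<le> k"
    unfolding Eset_def by blast
  then have "X = cf (Lw U M (x @ [z])) \<rho>" by (simp add: cf_cf)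
  moreover have "length (x @ [z]) \<le> Suc k" using x by simp
  ultimately show "X \<in> Eset U M \<rho> (Suc k)" unfolding Eset_def by blast
qed

lemma stab_step:
  assumes "cs.span (Eset U M \<rho> k) = cs.span (Eset U M \<rho> (Suc k))"
  shows "cs.span (Eset U M \<rho> (Suc k)) = cs.span (Eset U M \<rho> (Suc (Suc k)))"
proof
  show "cs.span (Eset U M \<rho> (Suc k)) \<subseteq> cs.span (Eset U M \<rho> (Suc (Suc k)))"
    by (intro cs.span_mono Eset_mono) simp
next
  have "\<And>z. cf (opm U M z) ` Eset U M \<rho> (Suc k) \<subseteq> cs.span (Eset U M \<rho> (Suc k))"
  proof -
    fix z
    have "cf (opm U M z) ` Eset U M \<rho> (Suc k) \<subseteq> cf (opm U M z) ` cs.span (Eset U M \<rho> (Suc k))"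
      using cs.span_superset by blast
    also have "\<dots> = cf (opm U M z) ` cs.span (Eset U M \<rho> k)" using assms by simp
    also have "\<dots> \<subseteq> cs.span (cf (opm U M z) ` Eset U M \<rho> k)" by (rule cf_span)
    also have "\<dots> \<subseteq> cs.span (Eset U M \<rho> (Suc k))" by (intro cs.span_mono Eset_Suc2)
    finally show "cf (opm U M z) ` Eset U M \<rho> (Suc k) \<subseteq> cs.span (Eset U M \<rho> (Suc k))" .
  qed
  then have "Eset U M \<rho> (Suc (Suc k)) \<subseteq> cs.span (Eset U M \<rho> (Suc k))"
    using Eset_Suc1[of U M \<rho> "Suc k"] Eset_rho[of \<rho> U M "Suc k"] cs.span_superset by blast
  then show "cs.span (Eset U M \<rho> (Suc (Suc k))) \<subseteq> cs.span (Eset U M \<rho> (Suc k))"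
    using cs.span_mono cs.span_span by blast
qed

lemma stab_all:
  assumes "cs.span (Eset U M \<rho> k) = cs.span (Eset U M \<rho> (Suc k))"
  shows "cs.span (Eset U M \<rho> (k + i)) = cs.span (Eset U M \<rho> k)"
proof (induction i)
  case 0 then show ?case by simp
next
  case (Suc i)
  have "cs.span (Eset U M \<rho> (k + i)) = cs.span (Eset U M \<rho> (Suc (k + i)))"
  proof (cases i)
    case 0 then show ?thesis using assms by simp
  next
    case (Suc j)
    have "cs.span (Eset U M \<rho> (k + j)) = cs.span (Eset U M \<rho> (Suc (k + j)))"
    proof -
      have "cs.span (Eset U M \<rho> (k + j)) = cs.span (Eset U M \<rho> k)"
      proof -
        have "cs.span (Eset U M \<rho> k) \<subseteq> cs.span (Eset U M \<rho> (k + j))"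
          by (intro cs.span_mono Eset_mono) simp
        moreover have "cs.span (Eset U M \<rho> (k + j)) \<subseteq> cs.span (Eset U M \<rho> (k + i))"
          by (intro cs.span_mono Eset_mono) (simp add: Suc)
        ultimately show ?thesis using Suc.IH by blast
      qed
      then show ?thesis using Suc.IH Suc by simp
    qed
    then show ?thesis using stab_step Suc by simp
  qed
  then show ?case using Suc.IH by simp
qed

definition Eu :: "'n::finite \<Rightarrow> 'n \<Rightarrow> complex^'n^'n" where
  "Eu i j = (\<chi> a b. if a = i \<and> b = j then 1 else 0)"

lemma unit_sum_aux:
  "(\<Sum>p\<in>UNIV. (A::complex^'n::finite^'n) $ fst p $ snd p * (if a = fst p \<and> b = snd p then 1 else 0)) = A $ a $ b"
proof -
  have "(\<Sum>p\<in>UNIV. A $ fst p $ snd p * (if a = fst p \<and> b = snd p then 1 else 0))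
      = (\<Sum>p\<in>UNIV. if p = (a, b) then A $ a $ b else 0)"
    by (rule sum.cong) auto
  then show ?thesis by simp
qed

lemma unit_decomp:
  "(A::complex^'n::finite^'n) = (\<Sum>p\<in>UNIV. cscale (A $ fst p $ snd p) (Eu (fst p) (snd p)))"
  by (simp add: vec_eq_iff cscale_def Eu_def unit_sum_aux)

lemma units_span: "(A::complex^'n::finite^'n) \<in> cs.span (range (\<lambda>p. Eu (fst p) (snd p)))"
proof -
  have "(\<Sum>p\<in>UNIV. cscale (A $ fst p $ snd p) (Eu (fst p) (snd p)))
        \<in> cs.span (range (\<lambda>p. Eu (fst p) (snd p)))"
    by (intro cs.span_sum cs.span_scale cs.span_base) auto
  then show ?thesis using unit_decomp[of A] by simp
qed

lemma cf_zero: "cf A (0::complex^'n^'n) = 0"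
  by (simp add: cf_def matrix_matrix_mult_def vec_eq_iff)

theorem propositionA2:
  fixes U :: "'s::finite \<Rightarrow> complex^'n^'n" and M :: "'g::finite \<Rightarrow> complex^'n^'n"
    and \<rho> :: "complex^'n^'n"
  assumes "is_QMM U M" and "hermitian \<rho>"
  shows "\<forall>m::nat. cspan (Dset U M \<rho> m) \<subseteq> cspan (Dset U M \<rho> (CARD('n)^2 - 1))"
proof -
  define W where "W k = cs.span (Eset U M \<rho> k)" for k
  define N where "N = CARD('n)^2 - 1"
  define Us where "Us = range (\<lambda>p::'n\<times>'n. Eu (fst p) (snd p))"
  obtain B where B: "B \<subseteq> Us" "cs.independent B" "Us \<subseteq> cs.span B"
    using cs.maximal_independent_subset by blast
  have finUs: "finite Us" unfolding Us_def by simp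
  have finB: "finite B" using B(1) finUs finite_subset by blast
  have spanB: "cs.span B = UNIV"
  proof -
    have "cs.span Us \<subseteq> cs.span B" using B(3) cs.span_mono cs.span_span by blast
    moreover have "UNIV \<subseteq> cs.span Us" using units_span unfolding Us_def by blast
    ultimately show ?thesis by blast
  qed
  interpret fd: finite_dimensional_vector_space "cscale :: complex \<Rightarrow> complex^'n^'n \<Rightarrow> _" B
    by unfold_locales (use finB B(2) spanB in auto)
  have cardUs: "card Us \<le> CARD('n)^2"
  proof -
    have "card Us \<le> card (UNIV :: ('n\<times>'n) set)" unfolding Us_def by (rule card_image_le) simp
    also have "\<dots> = CARD('n)^2" by (simp add: power2_eq_square)
    finally show ?thesis .
  qed
  have cardB: "card B \<le> CARD('n)^2" using card_mono[OF finUs B(1)] cardUs by simp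
  have npos: "CARD('n) > 0" by simp
  then have N1: "Suc N = CARD('n)^2" unfolding N_def by simp
  have mono: "W i \<subseteq> W j" if "i \<le> j" for i j
    unfolding W_def using that by (intro cs.span_mono Eset_mono)
  have main: "W m \<subseteq> W N" for m
  proof (cases "\<exists>j\<le>N. W j = W (Suc j)")
    case True
    then obtain j where j: "j \<le> N" "W j = W (Suc j)" by blast
    show ?thesis
    proof (cases "m \<le> N")
      case True then show ?thesis using mono by blast
    next
      case False
      have "W (j + (m - j)) = W j" using stab_all[of U M \<rho> j "m - j"] j(2) unfolding W_def by blast
      then have "W m = W j" using False j(1) by simp
      then show ?thesis using mono[OF j(1)] by simp
    qed
  next
    case False
    have lt: "cs.dim (Eset U M \<rho> j) < cs.dim (Eset U M \<rho> (Suc j))" if "j \<le> N" for j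
    proof -
      have "W j \<subset> W (Suc j)" using False that mono[of j "Suc j"] by auto
      then show ?thesis unfolding W_def by (rule fd.dim_psubset)
    qed
    have ge: "j \<le> Suc N \<Longrightarrow> j + cs.dim (Eset U M \<rho> 0) \<le> cs.dim (Eset U M \<rho> j)" for j
    proof (induction j)
      case 0 then show ?case by simp
    next
      case (Suc j) then show ?case using lt[of j] by simp
    qed
    have "cs.dim (Eset U M \<rho> (Suc N)) \<le> card B"
      using fd.dim_subset_UNIV fd.dimension_def by simp
    then have "cs.dim (Eset U M \<rho> 0) = 0" using ge[of "Suc N"] cardB N1 by linarith
    then have "Eset U M \<rho> 0 \<subseteq> {0}" using fd.dim_eq_0 by blast
    then have r0: "\<rho> = 0" using Eset_rho[of \<rho> U M 0] by blast
    have "Eset U M \<rho> k = {0}" for k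
      using Eset_rho[of \<rho> U M k] unfolding Eset_def r0 by (auto simp: cf_zero)
    then have "W 0 = W (Suc 0)" unfolding W_def by simp
    then show ?thesis using False by blast
  qed
  show ?thesis using main unfolding W_def N_def cspan_def Dset_Eset by blast
qed

end
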